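(* For every environment $\omega$, $n=l+m$, $x=-l+m$ with $l,m\ge 0$, $$P^{\omega}_n(X_n=x)=P^{\mathbf 0}_n(X_n=x)+\tfrac12\{p^{(H)}_n(l,m)^2-q^{(H)}_n(l,m)^2\}\sin(\omega_0)$$ $$\quad-\frac{r^{(H)}_n(l,m)}{2}\Big[p^{(H)}_n(l,m)\,\Im\big((1+e^{2i\omega_0})\Theta^{(p)}_n(l,m)\overline{\Theta^{(r)}_n(l,m)}\big)+q^{(H)}_n(l,m)\,\Im\big((1+e^{2i\omega_0})\Theta^{(s)}_n(l,m)\overline{\Theta^{(q)}_n(l,m)}\big)\Big],$$ where $P^{\mathbf 0}_n$ is the quenched law for the environment $\omega\equiv 0$ and $\Im$ denotes imaginary part.
   Context: $U_x=\frac{1}{\sqrt2}\begin{pmatrix} e^{i\omega_x} & 1\\ 1 & -e^{-i\omega_x}\end{pmatrix}=\begin{pmatrix} a_x & b_x\\ c_x & d_x\end{pmatrix}$, $P_x=\begin{pmatrix} a_x & b_x\\ 0&0\end{pmatrix}$, $Q_x=\begin{pmatrix} 0&0\\ c_x & d_x\end{pmatrix}$, $R_0=\begin{pmatrix} c_0 & d_0\\ 0&0\end{pmatrix}$, $S_0=\begin{pmatrix} 0&0\\ a_0 & b_0\end{pmatrix}$. $\Xi_0(0,0)=I$, $\Xi_n(l,m)=0$ if $l<0$ or $m<0$, and $\Xi_{n+1}(l,m)=P_{x+1}\Xi_n(l-1,m)+Q_{x-1}\Xi_n(l,m-1)$ for $l,m\ge0$, $l+m=n+1$, $x=-l+m$.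 With $\varphi_*={}^T[1/\sqrt2,i/\sqrt2]$, $P^{\omega}_n(X_n=x)=\|\Xi_n(l,m)\varphi_*\|^2$. The quantities $\Theta^{(a)}_n(l,m)$ and $a^{(H)}_n(l,m)$ ($a\in\{p,q,r,s\}$) are defined by: for $\min\{l,m\}\ge1$, $\Theta^{(p)}_n=e^{i(\omega_{-1}+\cdots+\omega_{-(l-m-1)})}$ if $l-1>m$, $1$ if $l-1=m$, $e^{-i(\omega_0+\cdots+\omega_{m-l})}$ if $l-1<m$; $\Theta^{(q)}_n=e^{i(\omega_0+\cdots+\omega_{-(l-m)})}$ if $l>m-1$, $1$ if $l=m-1$, $e^{-i(\omega_1+\cdots+\omega_{m-l-1})}$ if $l<m-1$; $\Theta^{(r)}_n=e^{i(\omega_0+\cdots+\omega_{-(l-m-1)})}$ if $l>m$, $1$ if $l=m$, $e^{-i(\omega_1+\cdots+\omega_{m-l})}$ if $l<m$; $\Theta^{(s)}_n=e^{i(\omega_{-1}+\cdots+\omega_{-(l-m)})}$ if $l>m$, $1$ if $l=m$, $e^{-i(\omega_0+\cdots+\omega_{m-l-1})}$ if $l<m$; $p^{(H)}_n(l,m)=(1/\sqrt2)^{n-1}\sum_{\gamma=1}^{(l-1)\wedge m}(-1)^{m-\gamma}\binom{l-1}{\gamma}\binom{m-1}{\gamma-1}$, $q^{(H)}_n(l,m)=(1/\sqrt2)^{n-1}\sum_{\gamma=1}^{l\wedge(m-1)}(-1)^{m-\gamma-1}\binom{l-1}{\gamma-1}\binom{m-1}{\gamma}$, $r^{(H)}_n=s^{(H)}_n=(1/\sqrt2)^{n-1}\sum_{\gamma=1}^{l\wedge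 m}(-1)^{m-\gamma}\binom{l-1}{\gamma-1}\binom{m-1}{\gamma-1}$. For $\min\{l,m\}=0$: $q^{(H)}_n(0,n)=(-1/\sqrt2)^{n-1}$, $\Theta^{(q)}_n(0,n)=e^{-i(\omega_1+\cdots+\omega_{n-1})}$, $p^{(H)}_n(n,0)=(1/\sqrt2)^{n-1}$, $\Theta^{(p)}_n(n,0)=e^{i(\omega_{-1}+\cdots+\omega_{-(n-1)})}$, all other $a^{(H)}$ equal $0$ and all other $\Theta$ equal $1$. These satisfy $\Xi_n(l,m)=\sum_{a}\Theta^{(a)}_n a^{(H)}_n A_0$ with $A_0\in\{P_0,Q_0,R_0,S_0\}$ respectively. *)

theory Defs
  imports "HOL-Analysis.Analysis"
begin

text \<open>Environment: omega :: int => real (omega_x at site x). 2x2 complex matrices are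
  complex^2^2, vectors complex^2; index 1 = first row/component, 2 = second.\<close>

definition mat2 :: "complex \<Rightarrow> complex \<Rightarrow> complex \<Rightarrow> complex \<Rightarrow> complex^2^2" where
  "mat2 a b c d = (\<chi> i j. if i = 1 then (if j = 1 then a else b) else (if j = 1 then c else d))"

definition ua :: "(int \<Rightarrow> real) \<Rightarrow> int \<Rightarrow> complex" where
  "ua \<omega> x = exp (\<i> * complex_of_real (\<omega> x)) / complex_of_real (sqrt 2)"
definition ub :: "(int \<Rightarrow> real) \<Rightarrow> int \<Rightarrow> complex" where
  "ub \<omega> x = 1 / complex_of_real (sqrt 2)"
definition uc :: "(int \<Rightarrow> real) \<Rightarrow> int \<Rightarrow> complex" where
  "uc \<omega> x = 1 / complex_of_real (sqrt 2)"
definition ud :: "(int \<Rightarrow> real) \<Rightarrow> int \<Rightarrow> complex" where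
  "ud \<omega> x = - exp (- \<i> * complex_of_real (\<omega> x)) / complex_of_real (sqrt 2)"

definition Umat :: "(int \<Rightarrow> real) \<Rightarrow> int \<Rightarrow> complex^2^2" where
  "Umat \<omega> x = mat2 (ua \<omega> x) (ub \<omega> x) (uc \<omega> x) (ud \<omega> x)"
definition Pmat :: "(int \<Rightarrow> real) \<Rightarrow> int \<Rightarrow> complex^2^2" where
  "Pmat \<omega> x = mat2 (ua \<omega> x) (ub \<omega> x) 0 0"
definition Qmat :: "(int \<Rightarrow> real) \<Rightarrow> int \<Rightarrow> complex^2^2" where
  "Qmat \<omega> x = mat2 0 0 (uc \<omega> x) (ud \<omega> x)"

text \<open>Xi omega n l m = Xi_n(l,m); negative l or m give 0 (encoded by the guards).\<close>
fun Xi :: "(int \<Rightarrow> real) \<Rightarrow> nat \<Rightarrow> nat \<Rightarrow> nat \<Rightarrow> complex^2^2" where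
  "Xi \<omega> 0 l m = (if l = 0 \<and> m = 0 then mat 1 else 0)"
| "Xi \<omega> (Suc n) l m =
     (if l + m = Suc n then
        (let x = - int l + int m in
          (if l \<ge> 1 then Pmat \<omega> (x + 1) ** Xi \<omega> n (l - 1) m else 0)
        + (if m \<ge> 1 then Qmat \<omega> (x - 1) ** Xi \<omega> n l (m - 1) else 0))
      else 0)"

definition phi_star :: "complex^2" where
  "phi_star = (\<chi> i. if i = 1 then 1 / complex_of_real (sqrt 2) else \<i> / complex_of_real (sqrt 2))"

text \<open>prob omega n l m = P^omega_n(X_n = -l+m) with n = l+m.\<close>
definition prob :: "(int \<Rightarrow> real) \<Rightarrow> nat \<Rightarrow> nat \<Rightarrow> nat \<Rightarrow> real" where
  "prob \<omega> n l m = (norm (Xi \<omega> n l m *v phi_star))\<^sup>2"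

definition osum :: "(int \<Rightarrow> real) \<Rightarrow> int \<Rightarrow> int \<Rightarrow> real" where
  "osum \<omega> a b = (\<Sum>k\<in>{a..b}. \<omega> k)"
definition osum_neg :: "(int \<Rightarrow> real) \<Rightarrow> int \<Rightarrow> int \<Rightarrow> real" where
  "osum_neg \<omega> a b = (\<Sum>k\<in>{a..b}. \<omega> (- k))"

definition eip :: "real \<Rightarrow> complex" where
  "eip t = exp (\<i> * complex_of_real t)"

definition Theta_p :: "(int \<Rightarrow> real) \<Rightarrow> nat \<Rightarrow> nat \<Rightarrow> complex" where
  "Theta_p \<omega> l m =
    (let L = int l; M = int m in
     if min l m \<ge> 1 then
       (if L - 1 > M then eip (osum_neg \<omega> 1 (L - M - 1))
        else if L - 1 = M then 1 else eip (- osum \<omega> 0 (M - L)))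
     else if m = 0 then eip (osum_neg \<omega> 1 (int (l + m) - 1)) else 1)"

definition Theta_q :: "(int \<Rightarrow> real) \<Rightarrow> nat \<Rightarrow> nat \<Rightarrow> complex" where
  "Theta_q \<omega> l m =
    (let L = int l; M = int m in
     if min l m \<ge> 1 then
       (if L > M - 1 then eip (osum_neg \<omega> 0 (L - M))
        else if L = M - 1 then 1 else eip (- osum \<omega> 1 (M - L - 1)))
     else if l = 0 then eip (- osum \<omega> 1 (int (l + m) - 1)) else 1)"

definition Theta_r :: "(int \<Rightarrow> real) \<Rightarrow> nat \<Rightarrow> nat \<Rightarrow> complex" where
  "Theta_r \<omega> l m =
    (let L = int l; M = int m in
     if min l m \<ge> 1 then
       (if L > M then eip (osum_neg \<omega> 0 (L - M - 1))
        else if L = M then 1 else eip (- osum \<omega> 1 (M - L)))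
     else 1)"

definition Theta_s :: "(int \<Rightarrow> real) \<Rightarrow> nat \<Rightarrow> nat \<Rightarrow> complex" where
  "Theta_s \<omega> l m =
    (let L = int l; M = int m in
     if min l m \<ge> 1 then
       (if L > M then eip (osum_neg \<omega> 1 (L - M))
        else if L = M then 1 else eip (- osum \<omega> 0 (M - L - 1)))
     else 1)"

definition pH :: "nat \<Rightarrow> nat \<Rightarrow> real" where
  "pH l m =
    (if min l m \<ge> 1 then
       (1 / sqrt 2) ^ (l + m - 1) *
       (\<Sum>\<gamma>=1..min (l - 1) m. (-1) ^ (m - \<gamma>) * real ((l - 1) choose \<gamma>) * real ((m - 1) choose (\<gamma> - 1)))
     else if m = 0 then (1 / sqrt 2) ^ (l + m - 1) else 0)"

definition qH :: "nat \<Rightarrow> nat \<Rightarrow> real" where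
  "qH l m =
    (if min l m \<ge> 1 then
       (1 / sqrt 2) ^ (l + m - 1) *
       (\<Sum>\<gamma>=1..min l (m - 1). (-1) ^ (m - \<gamma> - 1) * real ((l - 1) choose (\<gamma> - 1)) * real ((m - 1) choose \<gamma>))
     else if l = 0 then (- 1 / sqrt 2) ^ (l + m - 1) else 0)"

definition rH :: "nat \<Rightarrow> nat \<Rightarrow> real" where
  "rH l m =
    (if min l m \<ge> 1 then
       (1 / sqrt 2) ^ (l + m - 1) *
       (\<Sum>\<gamma>=1..min l m. (-1) ^ (m - \<gamma>) * real ((l - 1) choose (\<gamma> - 1)) * real ((m - 1) choose (\<gamma> - 1)))
     else 0)"

end

theory Submission
  imports Defs
begin



lemma mat2_mult: "mat2 a b c d ** mat2 e f g h = mat2 (a*e+b*g) (a*f+b*h) (c*e+d*g) (c*f+d*h)"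
  unfolding mat2_def matrix_matrix_mult_def by (simp add: vec_eq_iff sum_2 forall_2)

lemma mat2_add: "mat2 a b c d + mat2 e f g h = mat2 (a+e) (b+f) (c+g) (d+h)"
  unfolding mat2_def by (simp add: vec_eq_iff forall_2)

lemma mat2_zero: "(0::complex^2^2) = mat2 0 0 0 0"
  unfolding mat2_def by (simp add: vec_eq_iff forall_2)

lemma mat2_one: "(mat 1::complex^2^2) = mat2 1 0 0 1"
  unfolding mat2_def mat_def by (simp add: vec_eq_iff forall_2)

lemma mat2_mulv: "mat2 a b c d *v v = (\<chi> i. if i = 1 then a * v$1 + b * v$2 else c * v$1 + d * v$2)"
  unfolding mat2_def matrix_vector_mult_def by (simp add: vec_eq_iff sum_2 forall_2)

lemma norm2_sq: "(norm (v::complex^2))\<^sup>2 = (cmod (v$1))\<^sup>2 + (cmod (v$2))\<^sup>2"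
  unfolding norm_vec_def L2_set_def by (simp add: sum_2)




definition ff :: "nat \<Rightarrow> nat \<Rightarrow> real" where
  "ff A B = (\<Sum>k=0..A. (-1)^k * real (A choose k) * real (B choose k))"
definition gg :: "nat \<Rightarrow> nat \<Rightarrow> real" where
  "gg A B = (\<Sum>k=0..A. (-1)^k * real (A choose Suc k) * real (B choose k))"
definition hh :: "nat \<Rightarrow> nat \<Rightarrow> real" where
  "hh A B = (\<Sum>k=0..A. (-1)^k * real (A choose k) * real (B choose Suc k))"

lemma ff_ext: "ff A B = (\<Sum>k=0..Suc A. (-1)^k * real (A choose k) * real (B choose k))"
  unfolding ff_def by simp
lemma gg_ext: "gg A B = (\<Sum>k=0..Suc A. (-1)^k * real (A choose Suc k) * real (B choose k))"
  unfolding gg_def by simp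
lemma hh_ext: "hh A B = (\<Sum>k=0..Suc A. (-1)^k * real (A choose k) * real (B choose Suc k))"
  unfolding hh_def by simp

lemma gg_Suc: "gg (Suc A) B = gg A B + ff A B"
proof -
  have "gg (Suc A) B = (\<Sum>k=0..Suc A. (-1)^k * real (A choose Suc k) * real (B choose k)
          + (-1)^k * real (A choose k) * real (B choose k))"
    unfolding gg_def by (rule sum.cong) (auto simp: algebra_simps)
  also have "\<dots> = gg A B + ff A B" by (simp add: sum.distrib gg_ext ff_ext)
  finally show ?thesis .
qed

lemma ff_Suc: "ff (Suc A) B = ff A B - hh A B"
proof -
  have "ff (Suc A) B = 1 + (\<Sum>i=0..A. (-1)^Suc i * real (Suc A choose Suc i) * real (B choose Suc i))"
    unfolding ff_def by (subst sum.atLeast0_atMost_Suc_shift) simp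
  also have "\<dots> = 1 + (\<Sum>i=0..A. (-1)^Suc i * real (A choose Suc i) * real (B choose Suc i))
      + (\<Sum>i=0..A. (-1)^Suc i * real (A choose i) * real (B choose Suc i))"
    by (simp only: add.assoc sum.distrib[symmetric]) (intro arg_cong[where f="(+) 1"] sum.cong refl; simp add: algebra_simps)
  also have "(\<Sum>i=0..A. (-1)^Suc i * real (A choose i) * real (B choose Suc i)) = - hh A B"
    unfolding hh_def by (simp add: sum_negf[symmetric])
  also have "1 + (\<Sum>i=0..A. (-1)^Suc i * real (A choose Suc i) * real (B choose Suc i)) = ff A B"
    unfolding ff_ext by (subst sum.atLeast0_atMost_Suc_shift) simp
  finally show ?thesis by simp
qed

lemma hh_Suc: "hh A (Suc B) = hh A B + ff A B"
proof -
  have "hh A (Suc B) = (\<Sum>k=0..A. (-1)^k * real (A choose k) * real (B choose Suc k)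
          + (-1)^k * real (A choose k) * real (B choose k))"
    unfolding hh_def by (rule sum.cong) (auto simp: algebra_simps)
  also have "\<dots> = hh A B + ff A B" by (simp add: sum.distrib hh_def ff_def)
  finally show ?thesis .
qed

lemma ff_Suc2: "ff A (Suc B) = ff A B - gg A B"
proof -
  have "ff A (Suc B) = (\<Sum>k=0..Suc A. (-1)^k * real (A choose k) * real (Suc B choose k))"
    by (simp add: ff_ext)
  also have "\<dots> = 1 + (\<Sum>i=0..A. (-1)^Suc i * real (A choose Suc i) * real (Suc B choose Suc i))"
    by (subst sum.atLeast0_atMost_Suc_shift) simp
  also have "\<dots> = 1 + (\<Sum>i=0..A. (-1)^Suc i * real (A choose Suc i) * real (B choose Suc i))
      + (\<Sum>i=0..A. (-1)^Suc i * real (A choose Suc i) * real (B choose i))"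
    by (simp only: add.assoc sum.distrib[symmetric]) (intro arg_cong[where f="(+) 1"] sum.cong refl; simp add: algebra_simps)
  also have "(\<Sum>i=0..A. (-1)^Suc i * real (A choose Suc i) * real (B choose i)) = - gg A B"
    unfolding gg_def by (simp add: sum_negf[symmetric])
  also have "1 + (\<Sum>i=0..A. (-1)^Suc i * real (A choose Suc i) * real (B choose Suc i)) = ff A B"
    unfolding ff_ext by (subst sum.atLeast0_atMost_Suc_shift) simp
  finally show ?thesis by simp
qed




lemma neg1_pow_diff: "k \<le> B \<Longrightarrow> (-1::real)^(B-k) = (-1)^B * (-1)^k"
proof -
  assume "k \<le> B"
  then have "(-1::real)^B = (-1)^(B-k) * (-1)^k" by (simp flip: power_add)
  then have "(-1::real)^B * (-1)^k = (-1)^(B-k) * ((-1)^k * (-1)^k)" by simp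
  also have "(-1::real)^k * (-1)^k = 1" by (simp flip: power_add add: power_mult_distrib[symmetric] mult_2[symmetric] power_mult)
  finally show ?thesis by simp
qed

lemma rH_ff: "rH (Suc A) (Suc B) = (1/sqrt 2)^(A + B + 1) * ((-1)^B * ff A B)"
proof -
  have "(\<Sum>\<gamma>=1..min (Suc A) (Suc B). (-1::real) ^ (Suc B - \<gamma>) * real (A choose (\<gamma> - 1)) * real (B choose (\<gamma> - 1)))
      = (\<Sum>k<min (Suc A) (Suc B). (-1) ^ (B - k) * real (A choose k) * real (B choose k))"
    by (simp add: sum.atLeast1_atMost_eq del: min_Suc_Suc)
  also have "\<dots> = (\<Sum>k=0..A. (-1)^B * ((-1) ^ k * real (A choose k) * real (B choose k)))"
    by (rule sum.mono_neutral_cong_left) (auto simp: neg1_pow_diff)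
  also have "\<dots> = (-1)^B * ff A B" by (simp add: ff_def sum_distrib_left)
  finally show ?thesis unfolding rH_def by simp
qed

lemma pH_gg: "pH (Suc A) (Suc B) = (1/sqrt 2)^(A + B + 1) * ((-1)^B * gg A B)"
proof -
  have "(\<Sum>\<gamma>=1..min A (Suc B). (-1::real) ^ (Suc B - \<gamma>) * real (A choose \<gamma>) * real (B choose (\<gamma> - 1)))
      = (\<Sum>k<min A (Suc B). (-1) ^ (B - k) * real (A choose Suc k) * real (B choose k))"
    by (simp add: sum.atLeast1_atMost_eq)
  also have "\<dots> = (\<Sum>k=0..A. (-1)^B * ((-1) ^ k * real (A choose Suc k) * real (B choose k)))"
    by (rule sum.mono_neutral_cong_left) (auto simp: neg1_pow_diff)
  also have "\<dots> = (-1)^B * gg A B" by (simp add: gg_def sum_distrib_left)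
  finally show ?thesis unfolding pH_def by simp
qed

lemma qH_hh: "qH (Suc A) (Suc B) = (1/sqrt 2)^(A + B + 1) * ((-1)^Suc B * hh A B)"
proof -
  have "(\<Sum>\<gamma>=1..min (Suc A) B. (-1::real) ^ (Suc B - \<gamma> - 1) * real (A choose (\<gamma> - 1)) * real (B choose \<gamma>))
      = (\<Sum>k<min (Suc A) B. (-1) ^ (B - Suc k) * real (A choose k) * real (B choose Suc k))"
    by (simp add: sum.atLeast1_atMost_eq)
  also have "\<dots> = (\<Sum>k=0..A. (-1)^Suc B * ((-1) ^ k * real (A choose k) * real (B choose Suc k)))"
  proof (rule sum.mono_neutral_cong_left)
    fix k assume "k \<in> {..<min (Suc A) B}"
    then have "Suc k \<le> B" by auto
    then show "(-1::real) ^ (B - Suc k) * real (A choose k) * real (B choose Suc k) =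
          (-1)^Suc B * ((-1) ^ k * real (A choose k) * real (B choose Suc k))"
      by (simp add: neg1_pow_diff)
  qed auto
  also have "\<dots> = (-1)^Suc B * hh A B" by (simp add: hh_def sum_distrib_left)
  finally show ?thesis unfolding qH_def by simp
qed




lemma split3: "l \<ge> 1 \<Longrightarrow> 2 \<le> l+m \<Longrightarrow> (m = 0 \<and> (\<exists>k. l = Suc(Suc k))) \<or> (l = 1 \<and> (\<exists>B. m = Suc B)) \<or> (\<exists>A B. l = Suc(Suc A) \<and> m = Suc B)"
  by presburger


lemma sq2: "sqrt 2 * (1/sqrt 2)^(Suc k) = (1/sqrt 2)^k"
  by (simp add: field_simps)
lemma sq2': "sqrt 2 * (-(1/sqrt 2))^(Suc k) = -((-(1/sqrt 2))^k)"
  by (simp add: field_simps)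

lemma ff_0_left: "ff 0 B = 1" by (simp add: ff_def)
lemma ff_0_right: "ff A 0 = 1"
proof -
  have "ff A 0 = (\<Sum>k=0..A. if k = 0 then 1 else 0)" unfolding ff_def by (rule sum.cong) auto
  then show ?thesis by simp
qed

lemma pH_1: "pH (Suc 0) (Suc B) = 0" by (simp add: pH_def)
lemma pH_0: "pH 0 (Suc B) = 0" by (simp add: pH_def)
lemma qH_1: "qH (Suc A) (Suc 0) = 0" by (simp add: qH_def)
lemma qH_0: "qH (Suc A) 0 = 0" by (simp add: qH_def)
lemma rH_0l: "rH 0 m = 0" by (simp add: rH_def)
lemma rH_0r: "rH l 0 = 0" by (simp add: rH_def)
lemma pH_m0: "pH l 0 = (1/sqrt 2)^(l - 1)" by (simp add: pH_def)
lemma qH_l0: "qH 0 m = (-1/sqrt 2)^(m - 1)" by (simp add: qH_def)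

lemma MP: assumes "l \<ge> 1" "2 \<le> l + m" shows "sqrt 2 * pH l m = pH (l-1) m + rH (l-1) m"
proof -
  consider (a) k where "m = 0" "l = Suc (Suc k)" | (b) B where "l = 1" "m = Suc B"
    | (c) A B where "l = Suc (Suc A)" "m = Suc B"
    using split3[OF assms] by blast
  then show ?thesis
  proof cases
    case a then show ?thesis by (simp add: pH_m0 rH_0r sq2 del: power_Suc)
  next
    case b then show ?thesis by (simp add: pH_1 pH_0 rH_0l)
  next
    case c
    have "sqrt 2 * pH l m = sqrt 2 * (1/sqrt 2)^(Suc (A + B + 1)) * ((-1)^B * (gg A B + ff A B))"
      using c by (simp add: pH_gg gg_Suc)
    also have "\<dots> = (1/sqrt 2)^(A + B + 1) * ((-1)^B * (gg A B + ff A B))"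
      by (simp only: sq2)
    finally show ?thesis using c by (simp add: pH_gg rH_ff algebra_simps)
  qed
qed

lemma MR: assumes "l \<ge> 1" "2 \<le> l + m" shows "sqrt 2 * rH l m = qH (l-1) m + rH (l-1) m"
proof -
  consider (a) k where "m = 0" "l = Suc (Suc k)" | (b) B where "l = 1" "m = Suc B"
    | (c) A B where "l = Suc (Suc A)" "m = Suc B"
    using split3[OF assms] by blast
  then show ?thesis
  proof cases
    case a then show ?thesis by (simp add: qH_0 rH_0r)
  next
    case b
    have "sqrt 2 * rH l m = sqrt 2 * (1/sqrt 2)^(Suc B) * (-1)^B"
      using b by (simp add: rH_ff ff_0_left)
    also have "\<dots> = (-1/sqrt 2)^B" by (simp only: sq2) (simp add: power_mult_distrib[symmetric])
    finally show ?thesis using b by (simp add: qH_l0 rH_0l)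
  next
    case c
    have "sqrt 2 * rH l m = sqrt 2 * (1/sqrt 2)^(Suc (A + B + 1)) * ((-1)^B * (ff A B - hh A B))"
      using c by (simp add: rH_ff ff_Suc)
    also have "\<dots> = (1/sqrt 2)^(A + B + 1) * ((-1)^B * (ff A B - hh A B))"
      by (simp only: sq2)
    finally show ?thesis using c by (simp add: qH_hh rH_ff algebra_simps)
  qed
qed

lemma MQ: assumes "m \<ge> 1" "2 \<le> l + m" shows "sqrt 2 * qH l m = rH l (m-1) - qH l (m-1)"
proof -
  consider (a) k where "l = 0" "m = Suc (Suc k)" | (b) A where "m = 1" "l = Suc A"
    | (c) A B where "m = Suc (Suc B)" "l = Suc A"
    using split3[of m l] assms by (auto simp: add.commute)
  then show ?thesis
  proof cases
    case a then show ?thesis by (simp add: qH_l0 rH_0l sq2' del: power_Suc)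
  next
    case b then show ?thesis by (simp add: qH_1 qH_0 rH_0r)
  next
    case c
    have "sqrt 2 * qH l m = sqrt 2 * (1/sqrt 2)^(Suc (A + B + 1)) * ((-1)^B * (hh A B + ff A B))"
      using c by (simp add: qH_hh hh_Suc)
    also have "\<dots> = (1/sqrt 2)^(A + B + 1) * ((-1)^B * (hh A B + ff A B))"
      by (simp only: sq2)
    finally show ?thesis using c by (simp add: qH_hh rH_ff algebra_simps)
  qed
qed

lemma MS: assumes "m \<ge> 1" "2 \<le> l + m" shows "sqrt 2 * rH l m = pH l (m-1) - rH l (m-1)"
proof -
  consider (a) k where "l = 0" "m = Suc (Suc k)" | (b) A where "m = 1" "l = Suc A"
    | (c) A B where "m = Suc (Suc B)" "l = Suc A"
    using split3[of m l] assms by (auto simp: add.commute)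
  then show ?thesis
  proof cases
    case a then show ?thesis by (simp add: pH_0 rH_0l)
  next
    case b
    have "sqrt 2 * rH l m = sqrt 2 * (1/sqrt 2)^(Suc A)"
      using b by (simp add: rH_ff ff_0_right)
    also have "\<dots> = (1/sqrt 2)^A" by (simp only: sq2)
    finally show ?thesis using b by (simp add: pH_m0 rH_0r)
  next
    case c
    have "sqrt 2 * rH l m = sqrt 2 * (1/sqrt 2)^(Suc (A + B + 1)) * ((-1)^Suc B * (ff A B - gg A B))"
      using c by (simp add: rH_ff ff_Suc2)
    also have "\<dots> = (1/sqrt 2)^(A + B + 1) * ((-1)^Suc B * (ff A B - gg A B))"
      by (simp only: sq2)
    finally show ?thesis using c by (simp add: pH_gg rH_ff algebra_simps)
  qed
qed




definition G :: "(int \<Rightarrow> real) \<Rightarrow> int \<Rightarrow> real" where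
  "G \<omega> k = (if k \<ge> 0 then (\<Sum>j\<in>{0..<k}. \<omega> j) else - (\<Sum>j\<in>{k..<0}. \<omega> j))"

lemma G_step: "G \<omega> (k + 1) = G \<omega> k + \<omega> k"
proof (cases "k \<ge> 0")
  case True
  have "{0..<k+1} = insert k {0..<k}" using True by auto
  then show ?thesis using True by (simp add: G_def)
next
  case False
  show ?thesis
  proof (cases "k + 1 = 0")
    case True
    then have "{k..<0} = {k}" by auto
    then show ?thesis using True False by (simp add: G_def)
  next
    case F2: False
    have "{k..<0} = insert k {k+1..<0}" using False by auto
    then show ?thesis using False F2 by (simp add: G_def)
  qed
qed

lemma omega_G: "\<omega> k = G \<omega> (k + 1) - G \<omega> k" using G_step[of \<omega> k] by simp

lemma sum_G: "a \<le> b \<Longrightarrow> (\<Sum>j\<in>{a..<b}. \<omega> j) = G \<omega> b - G \<omega> a"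
proof (induction b rule: int_ge_induct)
  case base then show ?case by simp
next
  case (step i)
  have "{a..<i+1} = insert i {a..<i}" using step by auto
  then show ?case using step by (simp add: G_step)
qed

lemma osum_G: "a \<le> b + 1 \<Longrightarrow> osum \<omega> a b = G \<omega> (b + 1) - G \<omega> a"
proof -
  assume "a \<le> b + 1"
  have "{a..b} = {a..<b+1}" by auto
  then show ?thesis using sum_G[OF \<open>a \<le> b + 1\<close>, of \<omega>] by (simp add: osum_def)
qed

lemma osum_neg_G: "a \<le> b + 1 \<Longrightarrow> osum_neg \<omega> a b = G \<omega> (1 - a) - G \<omega> (- b)"
proof -
  assume h: "a \<le> b + 1"
  have "osum_neg \<omega> a b = (\<Sum>j\<in>uminus ` {a..b}. \<omega> j)"
    unfolding osum_neg_def by (subst sum.reindex) (auto simp: inj_on_def)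
  also have "uminus ` {a..b} = {-b..<1-a}"
  proof
    show "{-b..<1-a} \<subseteq> uminus ` {a..b}"
    proof
      fix x assume "x \<in> {-b..<1-a}"
      then have "-x \<in> {a..b}" by auto
      then show "x \<in> uminus ` {a..b}" by (metis add.inverse_inverse image_eqI)
    qed
  qed auto
  also have "(\<Sum>j\<in>{-b..<1-a}. \<omega> j) = G \<omega> (1 - a) - G \<omega> (- b)" using h by (intro sum_G) auto
  finally show ?thesis .
qed

lemma eip_mult: "eip a * eip b = eip (a + b)"
  unfolding eip_def by (simp add: exp_add[symmetric] algebra_simps)
lemma eip_0: "eip 0 = 1" unfolding eip_def by simp
lemma eip_1I: "x = 0 \<Longrightarrow> eip x = 1" by (simp add: eip_0)
lemma eip_1I': "x = 0 \<Longrightarrow> 1 = eip x" by (simp add: eip_0)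

lemma PP1: assumes "(l \<ge> 3 \<and> m \<ge> 1) \<or> (m = 0 \<and> l \<ge> 2)"
  shows "eip (\<omega> (int m - int l + 1)) * Theta_p \<omega> (l-1) m = Theta_p \<omega> l m"
  using assms unfolding Theta_p_def Let_def
  apply (auto simp: osum_G osum_neg_G eip_mult eip_0 omega_G[of \<omega>] algebra_simps of_nat_diff intro!: arg_cong[where f=eip] eip_1I eip_1I')
  apply ((smt (verit))+)?
  done
lemma PP2: assumes "l \<ge> 2 \<and> m \<ge> 1"
  shows "Theta_s \<omega> (l-1) m = Theta_p \<omega> l m"
  using assms unfolding Theta_p_def Theta_s_def Let_def
  apply (auto simp: osum_G osum_neg_G eip_mult eip_0 omega_G[of \<omega>] algebra_simps of_nat_diff intro!: arg_cong[where f=eip] eip_1I eip_1I')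
  apply ((smt (verit))+)?
  done

lemma PR1: assumes "l \<ge> 2 \<and> m \<ge> 1"
  shows "eip (\<omega> (int m - int l + 1)) * Theta_r \<omega> (l-1) m = Theta_r \<omega> l m"
  using assms unfolding Theta_r_def Let_def
  apply (auto simp: osum_G osum_neg_G eip_mult eip_0 omega_G[of \<omega>] algebra_simps of_nat_diff intro!: arg_cong[where f=eip] eip_1I eip_1I')
  apply ((smt (verit))+)?
  done

lemma PR2: assumes "(l \<ge> 2 \<and> m \<ge> 2) \<or> (l = 1 \<and> m \<ge> 1)"
  shows "Theta_q \<omega> (l-1) m = Theta_r \<omega> l m"
  using assms unfolding Theta_q_def Theta_r_def Let_def
  apply (auto simp: osum_G osum_neg_G eip_mult eip_0 omega_G[of \<omega>] algebra_simps of_nat_diff intro!: arg_cong[where f=eip] eip_1I eip_1I')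
  apply ((smt (verit))+)?
  done

lemma PQ1: assumes "l \<ge> 1 \<and> m \<ge> 2"
  shows "Theta_r \<omega> l (m-1) = Theta_q \<omega> l m"
  using assms unfolding Theta_q_def Theta_r_def Let_def
  apply (auto simp: osum_G osum_neg_G eip_mult eip_0 omega_G[of \<omega>] algebra_simps of_nat_diff intro!: arg_cong[where f=eip] eip_1I eip_1I')
  apply ((smt (verit))+)?
  done

lemma PQ2: assumes "(l \<ge> 1 \<and> m \<ge> 3) \<or> (l = 0 \<and> m \<ge> 2)"
  shows "eip (- \<omega> (int m - int l - 1)) * Theta_q \<omega> l (m-1) = Theta_q \<omega> l m"
  using assms unfolding Theta_q_def Let_def
  apply (auto simp: osum_G osum_neg_G eip_mult eip_0 omega_G[of \<omega>] algebra_simps of_nat_diff intro!: arg_cong[where f=eip] eip_1I eip_1I')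
  apply ((smt (verit))+)?
  done

lemma PS1: assumes "(l \<ge> 2 \<and> m \<ge> 2) \<or> (m = 1 \<and> l \<ge> 1)"
  shows "Theta_p \<omega> l (m-1) = Theta_s \<omega> l m"
  using assms unfolding Theta_p_def Theta_s_def Let_def
  apply (auto simp: osum_G osum_neg_G eip_mult eip_0 omega_G[of \<omega>] algebra_simps of_nat_diff intro!: arg_cong[where f=eip] eip_1I eip_1I')
  apply ((smt (verit))+)?
  done

lemma PS2: assumes "l \<ge> 1 \<and> m \<ge> 2"
  shows "eip (- \<omega> (int m - int l - 1)) * Theta_s \<omega> l (m-1) = Theta_s \<omega> l m"
  using assms unfolding Theta_s_def Let_def
  apply (auto simp: osum_G osum_neg_G eip_mult eip_0 omega_G[of \<omega>] algebra_simps of_nat_diff intro!: arg_cong[where f=eip] eip_1I eip_1I')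
  apply ((smt (verit))+)?
  done




lemma pH_supp: "pH l m \<noteq> 0 \<Longrightarrow> (l \<ge> 2 \<and> m \<ge> 1) \<or> m = 0"
  by (cases "min l m \<ge> 1"; cases "l = 1") (auto simp: pH_def)
lemma qH_supp: "qH l m \<noteq> 0 \<Longrightarrow> (m \<ge> 2 \<and> l \<ge> 1) \<or> l = 0"
  by (cases "min l m \<ge> 1"; cases "m = 1") (auto simp: qH_def)
lemma rH_supp: "rH l m \<noteq> 0 \<Longrightarrow> l \<ge> 1 \<and> m \<ge> 1"
  by (auto simp: rH_def split: if_splits)

definition cP where "cP \<omega> l m = Theta_p \<omega> l m * complex_of_real (pH l m)"
definition cQ where "cQ \<omega> l m = Theta_q \<omega> l m * complex_of_real (qH l m)"
definition cR where "cR \<omega> l m = Theta_r \<omega> l m * complex_of_real (rH l m)"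
definition cS where "cS \<omega> l m = Theta_s \<omega> l m * complex_of_real (rH l m)"

lemma ua_eip: "ua \<omega> x = eip (\<omega> x) / complex_of_real (sqrt 2)"
  unfolding ua_def eip_def ..
lemma ud_eip: "ud \<omega> x = - eip (- \<omega> x) / complex_of_real (sqrt 2)"
  unfolding ud_def eip_def by simp

lemma sqrt2_c: "complex_of_real (sqrt 2) \<noteq> 0" by simp

lemma CP: assumes "2 \<le> l + m"
  shows "cP \<omega> l m = (if l \<ge> 1 then ua \<omega> (- int l + int m + 1) * cP \<omega> (l-1) m
                        + ub \<omega> (- int l + int m + 1) * cS \<omega> (l-1) m else 0)"
proof (cases "l \<ge> 1")
  case True
  have M: "pH l m = (pH (l-1) m + rH (l-1) m) / sqrt 2"
    using MP[OF True assms] by (simp add: field_simps)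
  have h1: "complex_of_real (pH (l-1) m) * (eip (\<omega> (int m - int l + 1)) * Theta_p \<omega> (l-1) m)
      = complex_of_real (pH (l-1) m) * Theta_p \<omega> l m"
  proof (cases "pH (l-1) m = 0")
    case False
    then have "(l \<ge> 3 \<and> m \<ge> 1) \<or> (m = 0 \<and> l \<ge> 2)" using pH_supp[OF False] True assms by auto
    then show ?thesis using PP1 by metis
  qed simp
  have h2: "complex_of_real (rH (l-1) m) * Theta_s \<omega> (l-1) m
      = complex_of_real (rH (l-1) m) * Theta_p \<omega> l m"
  proof (cases "rH (l-1) m = 0")
    case False
    then have "l \<ge> 2 \<and> m \<ge> 1" using rH_supp[OF False] True by auto
    then show ?thesis using PP2 by metis
  qed simp
  have "ua \<omega> (- int l + int m + 1) * cP \<omega> (l-1) m + ub \<omega> (- int l + int m + 1) * cS \<omega> (l-1) m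
      = (complex_of_real (pH (l-1) m) * (eip (\<omega> (int m - int l + 1)) * Theta_p \<omega> (l-1) m)
         + complex_of_real (rH (l-1) m) * Theta_s \<omega> (l-1) m) / complex_of_real (sqrt 2)"
    unfolding ua_eip ub_def cP_def cS_def by (simp add: field_simps)
  also have "\<dots> = cP \<omega> l m"
    unfolding h1 h2 cP_def M using sqrt2_c by (simp add: field_simps)
  finally show ?thesis using True by simp
next
  case False
  then have "l = 0" by simp
  moreover have "m \<ge> 1" using assms \<open>l = 0\<close> by simp
  ultimately show ?thesis by (cases m) (auto simp: cP_def pH_def)
qed

lemma CR: assumes "2 \<le> l + m"
  shows "cR \<omega> l m = (if l \<ge> 1 then ua \<omega> (- int l + int m + 1) * cR \<omega> (l-1) m
                        + ub \<omega> (- int l + int m + 1) * cQ \<omega> (l-1) m else 0)"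
proof (cases "l \<ge> 1")
  case True
  have M: "rH l m = (qH (l-1) m + rH (l-1) m) / sqrt 2"
    using MR[OF True assms] by (simp add: field_simps)
  have h1: "complex_of_real (rH (l-1) m) * (eip (\<omega> (int m - int l + 1)) * Theta_r \<omega> (l-1) m)
      = complex_of_real (rH (l-1) m) * Theta_r \<omega> l m"
  proof (cases "rH (l-1) m = 0")
    case False
    then have "l \<ge> 2 \<and> m \<ge> 1" using rH_supp[OF False] True by auto
    then show ?thesis using PR1 by metis
  qed simp
  have h2: "complex_of_real (qH (l-1) m) * Theta_q \<omega> (l-1) m
      = complex_of_real (qH (l-1) m) * Theta_r \<omega> l m"
  proof (cases "qH (l-1) m = 0")
    case False
    then have "(l \<ge> 2 \<and> m \<ge> 2) \<or> (l = 1 \<and> m \<ge> 1)" using qH_supp[OF False] True assms by auto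
    then show ?thesis using PR2 by metis
  qed simp
  have "ua \<omega> (- int l + int m + 1) * cR \<omega> (l-1) m + ub \<omega> (- int l + int m + 1) * cQ \<omega> (l-1) m
      = (complex_of_real (rH (l-1) m) * (eip (\<omega> (int m - int l + 1)) * Theta_r \<omega> (l-1) m)
         + complex_of_real (qH (l-1) m) * Theta_q \<omega> (l-1) m) / complex_of_real (sqrt 2)"
    unfolding ua_eip ub_def cR_def cQ_def by (simp add: field_simps)
  also have "\<dots> = cR \<omega> l m"
    unfolding h1 h2 cR_def M using sqrt2_c by (simp add: field_simps)
  finally show ?thesis using True by simp
next
  case False
  then show ?thesis by (simp add: cR_def rH_def)
qed

lemma CQ: assumes "2 \<le> l + m"
  shows "cQ \<omega> l m = (if m \<ge> 1 then uc \<omega> (- int l + int m - 1) * cR \<omega> l (m-1)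
                        + ud \<omega> (- int l + int m - 1) * cQ \<omega> l (m-1) else 0)"
proof (cases "m \<ge> 1")
  case True
  have M: "qH l m = (rH l (m-1) - qH l (m-1)) / sqrt 2"
    using MQ[OF True assms] by (simp add: field_simps)
  have h1: "complex_of_real (qH l (m-1)) * (eip (- \<omega> (int m - int l - 1)) * Theta_q \<omega> l (m-1))
      = complex_of_real (qH l (m-1)) * Theta_q \<omega> l m"
  proof (cases "qH l (m-1) = 0")
    case False
    then have "(l \<ge> 1 \<and> m \<ge> 3) \<or> (l = 0 \<and> m \<ge> 2)" using qH_supp[OF False] True assms by auto
    then show ?thesis using PQ2 by metis
  qed simp
  have h2: "complex_of_real (rH l (m-1)) * Theta_r \<omega> l (m-1)
      = complex_of_real (rH l (m-1)) * Theta_q \<omega> l m"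
  proof (cases "rH l (m-1) = 0")
    case False
    then have "l \<ge> 1 \<and> m \<ge> 2" using rH_supp[OF False] True by auto
    then show ?thesis using PQ1 by metis
  qed simp
  have "uc \<omega> (- int l + int m - 1) * cR \<omega> l (m-1) + ud \<omega> (- int l + int m - 1) * cQ \<omega> l (m-1)
      = (complex_of_real (rH l (m-1)) * Theta_r \<omega> l (m-1)
         - complex_of_real (qH l (m-1)) * (eip (- \<omega> (int m - int l - 1)) * Theta_q \<omega> l (m-1))) / complex_of_real (sqrt 2)"
    unfolding ud_eip uc_def cR_def cQ_def by (simp add: field_simps)
  also have "\<dots> = cQ \<omega> l m"
    unfolding h1 h2 cQ_def M using sqrt2_c by (simp add: field_simps)
  finally show ?thesis using True by simp
next
  case False
  then have "m = 0" by simp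
  moreover have "l \<ge> 1" using assms \<open>m = 0\<close> by simp
  ultimately show ?thesis by (cases l) (auto simp: cQ_def qH_def)
qed

lemma CS: assumes "2 \<le> l + m"
  shows "cS \<omega> l m = (if m \<ge> 1 then uc \<omega> (- int l + int m - 1) * cP \<omega> l (m-1)
                        + ud \<omega> (- int l + int m - 1) * cS \<omega> l (m-1) else 0)"
proof (cases "m \<ge> 1")
  case True
  have M: "rH l m = (pH l (m-1) - rH l (m-1)) / sqrt 2"
    using MS[OF True assms] by (simp add: field_simps)
  have h1: "complex_of_real (rH l (m-1)) * (eip (- \<omega> (int m - int l - 1)) * Theta_s \<omega> l (m-1))
      = complex_of_real (rH l (m-1)) * Theta_s \<omega> l m"
  proof (cases "rH l (m-1) = 0")
    case False
    then have "l \<ge> 1 \<and> m \<ge> 2" using rH_supp[OF False] True by auto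
    then show ?thesis using PS2 by metis
  qed simp
  have h2: "complex_of_real (pH l (m-1)) * Theta_p \<omega> l (m-1)
      = complex_of_real (pH l (m-1)) * Theta_s \<omega> l m"
  proof (cases "pH l (m-1) = 0")
    case False
    then have "(l \<ge> 2 \<and> m \<ge> 2) \<or> (m = 1 \<and> l \<ge> 1)" using pH_supp[OF False] True assms by auto
    then show ?thesis using PS1 by metis
  qed simp
  have "uc \<omega> (- int l + int m - 1) * cP \<omega> l (m-1) + ud \<omega> (- int l + int m - 1) * cS \<omega> l (m-1)
      = (complex_of_real (pH l (m-1)) * Theta_p \<omega> l (m-1)
         - complex_of_real (rH l (m-1)) * (eip (- \<omega> (int m - int l - 1)) * Theta_s \<omega> l (m-1))) / complex_of_real (sqrt 2)"
    unfolding ud_eip uc_def cP_def cS_def by (simp add: field_simps)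
  also have "\<dots> = cS \<omega> l m"
    unfolding h1 h2 cS_def M using sqrt2_c by (simp add: field_simps)
  finally show ?thesis using True by simp
next
  case False
  then show ?thesis by (simp add: cS_def rH_def)
qed




definition Dm where "Dm \<omega> l m = mat2 (cP \<omega> l m * ua \<omega> 0 + cR \<omega> l m * uc \<omega> 0) (cP \<omega> l m * ub \<omega> 0 + cR \<omega> l m * ud \<omega> 0)
   (cS \<omega> l m * ua \<omega> 0 + cQ \<omega> l m * uc \<omega> 0) (cS \<omega> l m * ub \<omega> 0 + cQ \<omega> l m * ud \<omega> 0)"

lemma mat2_eqI: "a = a' \<Longrightarrow> b = b' \<Longrightarrow> c = c' \<Longrightarrow> d = d' \<Longrightarrow> mat2 a b c d = mat2 a' b' c' d'" by simp

lemma step_mat: assumes "2 \<le> l + m"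
  shows "Dm \<omega> l m = (if l \<ge> 1 then Pmat \<omega> (- int l + int m + 1) ** Dm \<omega> (l-1) m else 0)
                   + (if m \<ge> 1 then Qmat \<omega> (- int l + int m - 1) ** Dm \<omega> l (m-1) else 0)"
proof -
  note C = CP[OF assms, of \<omega>] CR[OF assms, of \<omega>] CQ[OF assms, of \<omega>] CS[OF assms, of \<omega>]
  show ?thesis
    unfolding Dm_def Pmat_def Qmat_def
    by (cases "l \<ge> 1"; cases "m \<ge> 1")
       (simp_all only: C if_True if_False mat2_mult mat2_add mat2_zero;
        (rule mat2_eqI; simp add: algebra_simps))+
qed

lemma Xi_decomp: "n \<ge> 1 \<Longrightarrow> l + m = n \<Longrightarrow> Xi \<omega> n l m = Dm \<omega> l m"
proof (induction n arbitrary: l m rule: nat_induct_at_least)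
  case base
  then consider "l = 1" "m = 0" | "l = 0" "m = 1" by arith
  then show ?case
  proof cases
    case 1
    then show ?thesis
      by (simp add: Dm_def Pmat_def mat2_one mat2_mult cP_def cR_def cS_def cQ_def
          Theta_p_def pH_def rH_def qH_def osum_neg_def eip_0)
  next
    case 2
    then show ?thesis
      by (simp add: Dm_def Qmat_def mat2_one mat2_mult cP_def cR_def cS_def cQ_def
          Theta_q_def pH_def rH_def qH_def osum_def eip_0)
  qed
next
  case (Suc n)
  have "2 \<le> l + m" using Suc by simp
  have "Xi \<omega> (Suc n) l m = (if l \<ge> 1 then Pmat \<omega> (- int l + int m + 1) ** Xi \<omega> n (l-1) m else 0)
                   + (if m \<ge> 1 then Qmat \<omega> (- int l + int m - 1) ** Xi \<omega> n l (m-1) else 0)"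
    using Suc.prems by (simp add: Let_def)
  also have "\<dots> = (if l \<ge> 1 then Pmat \<omega> (- int l + int m + 1) ** Dm \<omega> (l-1) m else 0)
                   + (if m \<ge> 1 then Qmat \<omega> (- int l + int m - 1) ** Dm \<omega> l (m-1) else 0)"
    using Suc by auto
  also have "\<dots> = Dm \<omega> l m" using step_mat[OF \<open>2 \<le> l + m\<close>] by simp
  finally show ?case .
qed




lemma phi1: "phi_star $ 1 = 1 / complex_of_real (sqrt 2)" by (simp add: phi_star_def)
lemma phi2: "phi_star $ 2 = \<i> / complex_of_real (sqrt 2)" by (simp add: phi_star_def)

lemma sq2c: "complex_of_real (sqrt 2) * complex_of_real (sqrt 2) = 2"
  by (simp flip: of_real_mult)

lemma alpha_eq: "ua \<omega> 0 * phi_star $ 1 + ub \<omega> 0 * phi_star $ 2 = (exp (\<i> * complex_of_real (\<omega> 0)) + \<i>) / 2"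
  unfolding ua_def ub_def phi1 phi2 using sq2c by (simp add: field_simps)
lemma beta_eq: "uc \<omega> 0 * phi_star $ 1 + ud \<omega> 0 * phi_star $ 2 = (1 - \<i> * exp (- \<i> * complex_of_real (\<omega> 0))) / 2"
  unfolding uc_def ud_def phi1 phi2 using sq2c by (simp add: field_simps)

lemma exp_iw: "exp (\<i> * complex_of_real w) = Complex (cos w) (sin w)"
  by (simp add: complex_eq_iff Re_exp Im_exp)
lemma exp_miw: "exp (- (\<i> * complex_of_real w)) = Complex (cos w) (- sin w)"
  using exp_iw[of "-w"] by simp

lemma alpha_norm: "(cmod ((exp (\<i> * complex_of_real w) + \<i>) / 2))^2 = (1 + sin w) / 2"
proof -
  have "(exp (\<i> * complex_of_real w) + \<i>) / 2 = Complex (cos w / 2) ((sin w + 1) / 2)"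
    by (simp add: exp_iw complex_eq_iff)
  moreover have "(cos w / 2)^2 + ((sin w + 1) / 2)^2 = (1 + sin w) / 2"
    using sin_cos_squared_add[of w] by (simp add: power_divide power2_sum field_simps)
  ultimately show ?thesis by (simp add: cmod_power2)
qed

lemma beta_norm: "(cmod ((1 - \<i> * exp (- \<i> * complex_of_real w)) / 2))^2 = (1 - sin w) / 2"
proof -
  have "(1 - \<i> * exp (- \<i> * complex_of_real w)) / 2 = Complex ((1 - sin w) / 2) (- cos w / 2)"
    by (simp add: exp_miw complex_eq_iff)
  moreover have "((1 - sin w) / 2)^2 + (- cos w / 2)^2 = (1 - sin w) / 2"
    using sin_cos_squared_add[of w] by (simp add: power_divide power2_diff field_simps)
  ultimately show ?thesis by (simp add: cmod_power2)
qed

lemma ab_prod: "((exp (\<i> * complex_of_real w) + \<i>) / 2) * cnj ((1 - \<i> * exp (- \<i> * complex_of_real w)) / 2)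
   = \<i> * (1 + exp (2 * \<i> * complex_of_real w)) / 4"
proof -
  have e: "exp (2 * \<i> * complex_of_real w) = exp (\<i> * complex_of_real w) * exp (\<i> * complex_of_real w)"
    by (simp flip: exp_add add: mult.assoc)
  have c: "cnj (exp (- (\<i> * complex_of_real w))) = exp (\<i> * complex_of_real w)"
    by (simp add: exp_cnj)
  show ?thesis unfolding e by (simp add: c field_simps)
qed




lemma cmod_eip: "cmod (eip t) = 1" unfolding eip_def by (rule norm_exp_i_times)
lemma cmod_Tp: "cmod (Theta_p \<omega> l m) = 1" unfolding Theta_p_def Let_def by (auto simp: cmod_eip)
lemma cmod_Tq: "cmod (Theta_q \<omega> l m) = 1" unfolding Theta_q_def Let_def by (auto simp: cmod_eip)
lemma cmod_Tr: "cmod (Theta_r \<omega> l m) = 1" unfolding Theta_r_def Let_def by (auto simp: cmod_eip)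
lemma cmod_Ts: "cmod (Theta_s \<omega> l m) = 1" unfolding Theta_s_def Let_def by (auto simp: cmod_eip)

lemma sq_expand: "(cmod (A + B))^2 = (cmod A)^2 + (cmod B)^2 + 2 * Re (A * cnj B)"
  unfolding cmod_power2 by (simp add: power2_sum algebra_simps)

lemma row_sq: assumes "cmod u = 1" "cmod v = 1"
  shows "(cmod (u * complex_of_real p * a + v * complex_of_real r * b))^2
     = p^2 * (cmod a)^2 + r^2 * (cmod b)^2 + 2 * p * r * Re (u * cnj v * (a * cnj b))"
proof -
  have "Re (u * complex_of_real p * a * cnj (v * complex_of_real r * b)) = p * r * Re (u * cnj v * (a * cnj b))"
  proof -
    have "u * complex_of_real p * a * cnj (v * complex_of_real r * b) = complex_of_real (p * r) * (u * cnj v * (a * cnj b))"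
      by (simp add: algebra_simps)
    moreover have Re_ofr: "\<And>c z. Re (complex_of_real c * z) = c * Re z" by simp
    ultimately show ?thesis by (simp only: Re_ofr)
  qed
  then show ?thesis using assms by (simp add: sq_expand norm_mult power_mult_distrib)
qed

lemma prob_formula: assumes "n \<ge> 1" "l + m = n"
  shows "prob \<omega> n l m =
     (pH l m)^2 * ((1 + sin (\<omega> 0)) / 2) + (rH l m)^2 * ((1 - sin (\<omega> 0)) / 2)
   + 2 * pH l m * rH l m * Re (Theta_p \<omega> l m * cnj (Theta_r \<omega> l m) * (\<i> * (1 + exp (2 * \<i> * complex_of_real (\<omega> 0))) / 4))
   + (rH l m)^2 * ((1 + sin (\<omega> 0)) / 2) + (qH l m)^2 * ((1 - sin (\<omega> 0)) / 2)
   + 2 * rH l m * qH l m * Re (Theta_s \<omega> l m * cnj (Theta_q \<omega> l m) * (\<i> * (1 + exp (2 * \<i> * complex_of_real (\<omega> 0))) / 4))"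
proof -
  define \<alpha> where "\<alpha> = ua \<omega> 0 * phi_star $ 1 + ub \<omega> 0 * phi_star $ 2"
  define \<beta> where "\<beta> = uc \<omega> 0 * phi_star $ 1 + ud \<omega> 0 * phi_star $ 2"
  have v: "Xi \<omega> n l m *v phi_star = (\<chi> i. if i = 1 then cP \<omega> l m * \<alpha> + cR \<omega> l m * \<beta> else cS \<omega> l m * \<alpha> + cQ \<omega> l m * \<beta>)"
    unfolding Xi_decomp[OF assms] Dm_def mat2_mulv \<alpha>_def \<beta>_def
    by (rule arg_cong[where f=vec_lambda], rule ext) (auto simp: algebra_simps)
  have p: "prob \<omega> n l m = (cmod (cP \<omega> l m * \<alpha> + cR \<omega> l m * \<beta>))^2 + (cmod (cS \<omega> l m * \<alpha> + cQ \<omega> l m * \<beta>))^2"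
    unfolding prob_def v norm2_sq by simp
  have a: "\<alpha> = (exp (\<i> * complex_of_real (\<omega> 0)) + \<i>) / 2" unfolding \<alpha>_def by (rule alpha_eq)
  have b: "\<beta> = (1 - \<i> * exp (- \<i> * complex_of_real (\<omega> 0))) / 2" unfolding \<beta>_def by (rule beta_eq)
  have ab: "\<alpha> * cnj \<beta> = \<i> * (1 + exp (2 * \<i> * complex_of_real (\<omega> 0))) / 4" unfolding a b by (rule ab_prod)
  have na: "(cmod \<alpha>)^2 = (1 + sin (\<omega> 0)) / 2" unfolding a by (rule alpha_norm)
  have nb: "(cmod \<beta>)^2 = (1 - sin (\<omega> 0)) / 2" unfolding b by (rule beta_norm)
  have r1: "(cmod (cP \<omega> l m * \<alpha> + cR \<omega> l m * \<beta>))^2 = (pH l m)^2 * (cmod \<alpha>)^2 + (rH l m)^2 * (cmod \<beta>)^2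
      + 2 * pH l m * rH l m * Re (Theta_p \<omega> l m * cnj (Theta_r \<omega> l m) * (\<alpha> * cnj \<beta>))"
    unfolding cP_def cR_def by (rule row_sq[OF cmod_Tp cmod_Tr])
  have r2: "(cmod (cS \<omega> l m * \<alpha> + cQ \<omega> l m * \<beta>))^2 = (rH l m)^2 * (cmod \<alpha>)^2 + (qH l m)^2 * (cmod \<beta>)^2
      + 2 * rH l m * qH l m * Re (Theta_s \<omega> l m * cnj (Theta_q \<omega> l m) * (\<alpha> * cnj \<beta>))"
    unfolding cS_def cQ_def by (rule row_sq[OF cmod_Ts cmod_Tq])
  show ?thesis unfolding p r1 r2 ab na nb by simp
qed

lemma Tp0: "Theta_p (\<lambda>_. 0) l m = 1" unfolding Theta_p_def Let_def osum_def osum_neg_def by (simp add: eip_0)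
lemma Tq0: "Theta_q (\<lambda>_. 0) l m = 1" unfolding Theta_q_def Let_def osum_def osum_neg_def by (simp add: eip_0)
lemma Tr0: "Theta_r (\<lambda>_. 0) l m = 1" unfolding Theta_r_def Let_def osum_def osum_neg_def by (simp add: eip_0)
lemma Ts0: "Theta_s (\<lambda>_. 0) l m = 1" unfolding Theta_s_def Let_def osum_def osum_neg_def by (simp add: eip_0)

theorem mainTheorem5:
  fixes \<omega> :: "int \<Rightarrow> real" and l m n :: nat
  assumes "n = l + m"
  shows "prob \<omega> n l m =
           prob (\<lambda>_. 0) n l m
         + 1/2 * ((pH l m)\<^sup>2 - (qH l m)\<^sup>2) * sin (\<omega> 0)
         - rH l m / 2 *
             (pH l m * Im ((1 + exp (2 * \<i> * complex_of_real (\<omega> 0))) * Theta_p \<omega> l m * cnj (Theta_r \<omega> l m))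
            + qH l m * Im ((1 + exp (2 * \<i> * complex_of_real (\<omega> 0))) * Theta_s \<omega> l m * cnj (Theta_q \<omega> l m)))"
proof (cases "n = 0")
  case True
  then have "l = 0" "m = 0" using assms by auto
  then show ?thesis using True by (simp add: prob_def rH_def pH_def qH_def)
next
  case False
  then have n1: "n \<ge> 1" by simp
  define E where "E = 1 + exp (2 * \<i> * complex_of_real (\<omega> 0))"
  have re: "\<And>z. Re (z * (\<i> * E / 4)) = - Im (E * z) / 4"
    by (simp add: field_simps)
  have A: "prob \<omega> n l m =
     (pH l m)^2 * ((1 + sin (\<omega> 0)) / 2) + (rH l m)^2 * ((1 - sin (\<omega> 0)) / 2)
   + 2 * pH l m * rH l m * (- Im (E * (Theta_p \<omega> l m * cnj (Theta_r \<omega> l m))) / 4)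
   + (rH l m)^2 * ((1 + sin (\<omega> 0)) / 2) + (qH l m)^2 * ((1 - sin (\<omega> 0)) / 2)
   + 2 * rH l m * qH l m * (- Im (E * (Theta_s \<omega> l m * cnj (Theta_q \<omega> l m))) / 4)"
    unfolding prob_formula[OF n1 assms[symmetric]] E_def[symmetric] re ..
  have B: "prob (\<lambda>_. 0) n l m = (pH l m)^2 / 2 + (rH l m)^2 / 2 + (rH l m)^2 / 2 + (qH l m)^2 / 2"
    unfolding prob_formula[OF n1 assms[symmetric], of "\<lambda>_. 0"] by (simp add: Tp0 Tq0 Tr0 Ts0)
  have C: "(1 + exp (2 * \<i> * complex_of_real (\<omega> 0))) * Theta_p \<omega> l m * cnj (Theta_r \<omega> l m)
     = E * (Theta_p \<omega> l m * cnj (Theta_r \<omega> l m))"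
     "(1 + exp (2 * \<i> * complex_of_real (\<omega> 0))) * Theta_s \<omega> l m * cnj (Theta_q \<omega> l m)
     = E * (Theta_s \<omega> l m * cnj (Theta_q \<omega> l m))" unfolding E_def by (simp_all add: mult.assoc)
  have fin: "\<And>a r q t X Y :: real. a^2*((1+t)/2) + r^2*((1-t)/2) + 2*a*r*(-X/4) + r^2*((1+t)/2) + q^2*((1-t)/2) + 2*r*q*(-Y/4)
     = (a^2/2 + r^2/2 + r^2/2 + q^2/2) + 1/2*(a^2 - q^2)*t - r/2*(a*X + q*Y)"
    by (simp add: field_simps power2_eq_square)
  show ?thesis unfolding A B C by (rule fin)
qed


end
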